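(* Let $n\ge1$ and $\mathbf i\in\Sigma_{n+1}$. (1) If $\mathrm{ind}_D(\mathbf i)=0$, then for every $k\in[n]$ the path in $G(\mathbf i,k)$ with wire-expression $\ell_k\to\ell_{n+1}\to\ell_{k+1}$ (go up $\ell_k$ from $L_k$ to $\ell_k\cap\ell_{n+1}$, switch to $\ell_{n+1}$, go down to $\ell_{n+1}\cap\ell_{k+1}$, switch to $\ell_{k+1}$, go down to $L_{k+1}$) is a rigorous path; it is the D-canonical path with unique peak $\ell_k\cap\ell_{n+1}$. (2) If $\mathrm{ind}_A(\mathbf i)=0$, then for every $k\in[n]$ the path in $G(\mathbf i,k)$ with wire-expression $\ell_k\to\ell_1\to\ell_{k+1}$ is a rigorous path; it is the A-canonical path with unique peak $\ell_1\cap\ell_{k+1}$.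
   Context: $N=n(n+1)/2$; $\Sigma_{n+1}$: reduced words $(i_1,\dots,i_N)$ of the longest element of $\mathfrak S_{n+1}$ in $s_i=(i,i+1)$. Wiring diagram $G(\mathbf i)$: $n+1$ wires $\ell_1,\dots,\ell_{n+1}$ run top to bottom through positions $1,\dots,n+1$; at the top $\ell_k$ is in position $k$; the $j$-th node swaps the wires in positions $i_j,i_j+1$; at the bottom $\ell_k$ is in position $n+2-k$ and ends at $L_k$. Rigorous paths: for $k\in[n]$, $G(\mathbf i,k)$ has $\ell_1,\dots,\ell_k$ oriented upward and the rest downward. A rigorous path in $G(\mathbf i,k)$ starts at $L_k$, ends at $L_{k+1}$, moves along wires in their orientation, switches wires only at their crossing node, passes each node at most once, and never passes straight through $\ell_a\cap\ell_b$ while on $\ell_a$ when both are downward with $a>b$ or both upward with $a<b$. Indices: a 2-move exchanges adjacent letters $i,j$ with $|i-j|>1$, generating $\sim$. Every $\mathbf i$ satisfies $\mathbf i\sim\mathbf i_D^-(n,\dots,1)\mathbf i_D^+\sim\mathbf i_A^-(1,\dots,n)\mathbf i_A^+$; $\mathrm{ind}_D(\mathbf i)=|\mathbf i_D^+|$, $\mathrm{ind}_A(\mathbf i)=|\mathbf i_A^+|$ (lengths; independent of choices). Equivalently $\mathrm{ind}_D(\mathbf i)$ is the number of nodes not on $\ell_{n+1}$ on the side of $\ell_{n+1}$ containing $L_1,\dots,L_n$, and $\mathrm{ind}_A(\mathbf i)$ the number of nodes not on $\ell_1$ on the side of $\ell_1$ containing $L_2,\dots,L_{n+1}$. *)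

theory Defs
  imports Main
begin

(* Wiring diagram of a word w = (i_1,...,i_N) (list, 0-indexed: w!j is the
   letter of the (j+1)-th node).  Wires are numbered 1..n+1, positions 1..n+1.
   wpos w j a = position of wire l_a after the first j nodes (time j);
   at time 0 wire l_a is in position a; node j swaps positions w!j, w!j+1. *)
fun wpos :: "nat list \<Rightarrow> nat \<Rightarrow> nat \<Rightarrow> nat" where
  "wpos w 0 a = a"
| "wpos w (Suc j) a =
     (let p = wpos w j a; x = w ! j in
      if p = x then Suc x else if p = Suc x then x else p)"

(* w is a reduced word of the longest element of S_{n+1}: length N = n(n+1)/2,
   letters in [n], and the product s_{i_1}...s_{i_N} is w0, i.e. at the
   bottom wire l_a is in position n+2-a. *)
definition reduced_longest :: "nat \<Rightarrow> nat list \<Rightarrow> bool" where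
  "reduced_longest n w \<longleftrightarrow>
     length w = n * (n + 1) div 2 \<and> set w \<subseteq> {1..n} \<and>
     (\<forall>a\<in>{1..n+1}. wpos w (length w) a = n + 2 - a)"

definition on_node :: "nat list \<Rightarrow> nat \<Rightarrow> nat \<Rightarrow> bool" where
  "on_node w j a \<longleftrightarrow> wpos w j a = w ! j \<or> wpos w j a = Suc (w ! j)"

(* the node l_a \<inter> l_b (unique for reduced words of w0) *)
definition cross :: "nat list \<Rightarrow> nat \<Rightarrow> nat \<Rightarrow> nat" where
  "cross w a b = (THE j. j < length w \<and> on_node w j a \<and> on_node w j b)"

(* in G(i,k) the wires l_1..l_k are oriented upward *)
definition upward :: "nat \<Rightarrow> nat \<Rightarrow> bool" where
  "upward k a \<longleftrightarrow> a \<le> k"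

(* A path is given by its wire-expression ws = [w_0,...,w_m]: it travels on
   w_t from its entry point to its exit point and switches from w_t to w_{t+1}
   at the node w_t \<inter> w_{t+1}.  Points on a wire are measured by time:
   node j has time j, the bottom end L_a has time N = length w. *)
definition seg_entry :: "nat list \<Rightarrow> nat list \<Rightarrow> nat \<Rightarrow> nat" where
  "seg_entry w ws t = (if t = 0 then length w else cross w (ws ! (t - 1)) (ws ! t))"

definition seg_exit :: "nat list \<Rightarrow> nat list \<Rightarrow> nat \<Rightarrow> nat" where
  "seg_exit w ws t = (if Suc t = length ws then length w else cross w (ws ! t) (ws ! Suc t))"

(* nodes passed straight through on the t-th segment *)
definition straight :: "nat list \<Rightarrow> nat \<Rightarrow> nat list \<Rightarrow> nat \<Rightarrow> nat list" where
  "straight w k ws t =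
     filter (\<lambda>j. on_node w j (ws ! t) \<and>
                 (if upward k (ws ! t) then seg_exit w ws t < j \<and> j < seg_entry w ws t
                  else seg_entry w ws t < j \<and> j < seg_exit w ws t)) [0..<length w]"

definition visits :: "nat list \<Rightarrow> nat \<Rightarrow> nat list \<Rightarrow> nat list" where
  "visits w k ws =
     concat (map (\<lambda>t. straight w k ws t @ (if Suc t < length ws then [seg_exit w ws t] else []))
                 [0..<length ws])"

definition rigorous_path :: "nat \<Rightarrow> nat list \<Rightarrow> nat \<Rightarrow> nat list \<Rightarrow> bool" where
  "rigorous_path n w k ws \<longleftrightarrow>
     ws \<noteq> [] \<and> hd ws = k \<and> last ws = Suc k \<and> set ws \<subseteq> {1..n+1} \<and>
     (\<forall>t. Suc t < length ws \<longrightarrow> ws ! t \<noteq> ws ! Suc t) \<and>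
     (\<forall>t<length ws. if upward k (ws ! t) then seg_exit w ws t < seg_entry w ws t
                     else seg_entry w ws t < seg_exit w ws t) \<and>
     distinct (visits w k ws) \<and>
     (\<forall>t<length ws. \<forall>j\<in>set (straight w k ws t). \<forall>b\<in>{1..n+1}.
        b \<noteq> ws ! t \<and> on_node w j b \<longrightarrow>
        \<not> (\<not> upward k (ws ! t) \<and> \<not> upward k b \<and> ws ! t > b) \<and>
        \<not> (upward k (ws ! t) \<and> upward k b \<and> ws ! t < b))"

definition path_peaks :: "nat list \<Rightarrow> nat \<Rightarrow> nat list \<Rightarrow> nat set" where
  "path_peaks w k ws =
     {cross w (ws ! t) (ws ! Suc t) | t. Suc t < length ws \<and> upward k (ws ! t) \<and> \<not> upward k (ws ! Suc t)}"

(* ind_D: nodes not on l_{n+1} on the side of l_{n+1} containing L_1..L_n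
   (the side of larger positions) *)
definition ind_D :: "nat \<Rightarrow> nat list \<Rightarrow> nat" where
  "ind_D n w = card {j. j < length w \<and> wpos w j (n + 1) < w ! j}"

(* ind_A: nodes not on l_1 on the side of l_1 containing L_2..L_{n+1}
   (the side of smaller positions) *)
definition ind_A :: "nat list \<Rightarrow> nat" where
  "ind_A w = card {j. j < length w \<and> Suc (w ! j) < wpos w j 1}"

end

theory Submission
  imports Defs
begin


definition sw :: "nat \<Rightarrow> nat \<Rightarrow> nat" where
  "sw x p = (if p = x then Suc x else if p = Suc x then x else p)"

lemma wpos_Suc: "wpos w (Suc j) a = sw (w!j) (wpos w j a)"
  by (simp add: sw_def Let_def)

declare wpos.simps(2)[simp del]

lemma sw_inj: "sw x p = sw x q \<Longrightarrow> p = q"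
  by (auto simp: sw_def split: if_splits)

lemma wpos_inj: "wpos w j a = wpos w j b \<Longrightarrow> a = b"
  by (induction j) (auto simp: wpos_Suc dest: sw_inj)

lemma order_step:
  assumes "a \<noteq> b"
  shows "(wpos w (Suc j) b < wpos w (Suc j) a) =
    (if on_node w j a \<and> on_node w j b then wpos w j a < wpos w j b else wpos w j b < wpos w j a)"
proof -
  have "wpos w j a \<noteq> wpos w j b" using assms wpos_inj[of w j a b] by auto
  then show ?thesis by (auto simp: wpos_Suc sw_def on_node_def)
qed

lemma three_wire: "on_node w j a \<Longrightarrow> on_node w j b \<Longrightarrow> on_node w j c \<Longrightarrow> a = b \<or> a = c \<or> b = c"
  unfolding on_node_def using wpos_inj[of w j a b] wpos_inj[of w j a c] wpos_inj[of w j b c] by auto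

lemma cross_sym: "cross w a b = cross w b a"
  unfolding cross_def by (simp add: conj_commute conj_left_commute)

lemma gauss: "(\<Sum>b=1..n+1. b - 1) = n * (n + 1) div (2::nat)"
proof -
  have "2 * (\<Sum>b=1..n+1. b - 1) = n * (n + (1::nat))"
    by (induction n) (auto simp: algebra_simps)
  then show ?thesis by (simp only: flip: \<open>2 * (\<Sum>b=1..n+1. b - 1) = n * (n + (1::nat))\<close>)
qed

lemma ex_flip: "P 0 \<Longrightarrow> \<not> P m \<Longrightarrow> \<exists>j<m. P j \<and> \<not> P (Suc j)"
  by (induction m) (auto, metis less_Suc_eq)

locale RL = fixes n :: nat and w :: "nat list"
  assumes rl: "reduced_longest n w"
begin

lemma letters: "j < length w \<Longrightarrow> w!j \<in> {1..n}"
  using rl nth_mem unfolding reduced_longest_def by blast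

lemma final: "a \<in> {1..n+1} \<Longrightarrow> wpos w (length w) a = n + 2 - a"
  using rl unfolding reduced_longest_def by blast

lemma len: "length w = n * (n + 1) div 2"
  using rl unfolding reduced_longest_def by blast

definition Pr :: "(nat \<times> nat) set" where "Pr = Sigma {1..n+1} (\<lambda>b. {1..<b})"
definition Inv :: "nat \<Rightarrow> (nat \<times> nat) set" where
  "Inv j = {(b,a) \<in> Pr. wpos w j b < wpos w j a}"
definition S :: "nat \<Rightarrow> (nat \<times> nat) set" where
  "S j = {(b,a) \<in> Pr. on_node w j a \<and> on_node w j b}"

lemma finPr: "finite Pr" unfolding Pr_def by auto
lemma finInv: "finite (Inv j)" using finPr unfolding Inv_def by (auto intro: finite_subset)
lemma finS: "finite (S j)" using finPr unfolding S_def by (auto intro: finite_subset)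

lemma cardPr: "card Pr = length w"
  using gauss[of n] by (simp add: Pr_def len)

lemma InvN: "Inv (length w) = Pr"
  unfolding Inv_def Pr_def using final by auto

lemma Inv0: "Inv 0 = {}"
  unfolding Inv_def Pr_def by auto

lemma cardS: "card (S j) \<le> 1"
proof -
  have "\<forall>x\<in>S j. \<forall>y\<in>S j. x = y"
  proof (intro ballI)
    fix x y assume x: "x \<in> S j" and y: "y \<in> S j"
    obtain b a where xa: "x = (b,a)" by (cases x)
    obtain b' a' where ya: "y = (b',a')" by (cases y)
    from x y show "x = y" unfolding xa ya S_def Pr_def
      using three_wire[of w j a b a'] three_wire[of w j a b b'] by auto
  qed
  then show ?thesis using finS card_le_Suc0_iff_eq by auto
qed

lemma Inv_Suc: "Inv (Suc j) = (Inv j - S j) \<union> (S j - Inv j)"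
proof -
  have "\<And>b a. (b,a) \<in> Pr \<Longrightarrow> ((b,a) \<in> Inv (Suc j) \<longleftrightarrow> (((b,a) \<in> Inv j) \<noteq> ((b,a) \<in> S j)))"
  proof -
    fix b a assume p: "(b,a) \<in> Pr"
    then have "a \<noteq> b" unfolding Pr_def by auto
    moreover have "wpos w j a \<noteq> wpos w j b" using \<open>a \<noteq> b\<close> wpos_inj[of w j a b] by auto
    ultimately show "((b,a) \<in> Inv (Suc j) \<longleftrightarrow> (((b,a) \<in> Inv j) \<noteq> ((b,a) \<in> S j)))"
      using p order_step[of a b w j] unfolding Inv_def S_def by auto
  qed
  moreover have "Inv (Suc j) \<subseteq> Pr" "Inv j \<subseteq> Pr" "S j \<subseteq> Pr"
    unfolding Inv_def S_def by auto
  ultimately show ?thesis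
    apply (intro set_eqI)
    subgoal for x by (cases x) blast
    done
qed

lemma card_Suc_le: "card (Inv (Suc j)) \<le> card (Inv j) + 1"
proof -
  have "Inv (Suc j) \<subseteq> Inv j \<union> S j" using Inv_Suc by blast
  then have "card (Inv (Suc j)) \<le> card (Inv j \<union> S j)"
    using finInv finS by (simp add: card_mono)
  also have "\<dots> \<le> card (Inv j) + card (S j)" by (rule card_Un_le)
  finally show ?thesis using cardS[of j] by linarith
qed

lemma card_le: "card (Inv j) \<le> j"
  by (induction j) (use Inv0 card_Suc_le in \<open>auto intro: le_trans\<close>)

lemma card_add: "card (Inv (j + d)) \<le> card (Inv j) + d"
  by (induction d) (use card_Suc_le in \<open>auto intro: le_trans\<close>)

lemma card_eq: "j \<le> length w \<Longrightarrow> card (Inv j) = j"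
proof -
  assume "j \<le> length w"
  have "card (Inv (j + (length w - j))) \<le> card (Inv j) + (length w - j)" by (rule card_add[of j "length w - j"])
  then have "length w \<le> card (Inv j) + (length w - j)"
    using \<open>j \<le> length w\<close> InvN cardPr by simp
  then show ?thesis using card_le[of j] \<open>j \<le> length w\<close> by linarith
qed

lemma S_nonempty: "j < length w \<Longrightarrow> S j \<noteq> {}"
proof
  assume "j < length w" "S j = {}"
  then have "Inv (Suc j) = Inv j" using Inv_Suc by auto
  then show False using card_eq[of j] card_eq[of "Suc j"] \<open>j < length w\<close> by simp
qed

lemma S_not_Inv: "j < length w \<Longrightarrow> x \<in> S j \<Longrightarrow> x \<notin> Inv j"
proof
  assume j: "j < length w" and x: "x \<in> S j" "x \<in> Inv j"
  have "\<forall>a\<in>S j. \<forall>b\<in>S j. a = b" using cardS[of j] card_le_Suc0_iff_eq[OF finS] by simp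
  then have "S j \<subseteq> {x}" using x by blast
  then have "Inv (Suc j) \<subseteq> Inv j - {x}" using Inv_Suc x by auto
  then have "card (Inv (Suc j)) \<le> card (Inv j - {x})" using finInv by (simp add: card_mono)
  also have "\<dots> = card (Inv j) - 1" using x finInv by simp
  finally show False using card_eq[of j] card_eq[of "Suc j"] j by simp
qed

end

context RL begin

lemma inv_pres:
  assumes "b \<in> {1..n+1}" "1 \<le> a" "a < b" "t < length w" "wpos w t b < wpos w t a"
  shows "wpos w (Suc t) b < wpos w (Suc t) a"
proof -
  have "(b,a) \<in> Inv t" using assms unfolding Inv_def Pr_def by auto
  then have "(b,a) \<notin> S t" using S_not_Inv assms(4) by blast
  then have "\<not> (on_node w t a \<and> on_node w t b)" using assms unfolding S_def Pr_def by auto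
  then show ?thesis using order_step[of a b w t] assms by auto
qed

lemma inv_pres_le:
  assumes "b \<in> {1..n+1}" "1 \<le> a" "a < b" "t \<le> t'" "t' \<le> length w" "wpos w t b < wpos w t a"
  shows "wpos w t' b < wpos w t' a"
  using assms(4,5)
proof (induction t')
  case 0 then show ?case using assms(6) by simp
next
  case (Suc t')
  show ?case
  proof (cases "t \<le> t'")
    case True
    then show ?thesis using Suc inv_pres[OF assms(1-3)] by simp
  next
    case False
    then have "t = Suc t'" using Suc by simp
    then show ?thesis using assms(6) by simp
  qed
qed

lemma node_ord:
  assumes "b \<in> {1..n+1}" "1 \<le> a" "a < b" "j < length w" "on_node w j a" "on_node w j b"
  shows "wpos w j a < wpos w j b"
proof -
  have "(b,a) \<in> S j" using assms unfolding S_def Pr_def by auto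
  then have "(b,a) \<notin> Inv j" using S_not_Inv assms(4) by blast
  then have "\<not> wpos w j b < wpos w j a" using assms unfolding Inv_def Pr_def by auto
  moreover have "wpos w j a \<noteq> wpos w j b" using assms(3) wpos_inj[of w j a b] by auto
  ultimately show ?thesis by simp
qed

lemma char:
  assumes "b \<in> {1..n+1}" "1 \<le> a" "a < b" "j < length w" "on_node w j a" "on_node w j b"
    "t \<le> length w"
  shows "wpos w t a < wpos w t b \<longleftrightarrow> t \<le> j"
proof -
  have Pj: "wpos w j a < wpos w j b" using node_ord assms by blast
  have fl: "wpos w (Suc j) b < wpos w (Suc j) a"
    using order_step[of a b w j] assms Pj by auto
  have ne: "wpos w t a \<noteq> wpos w t b" using assms(3) wpos_inj[of w t a b] by auto
  show ?thesis
  proof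
    assume "wpos w t a < wpos w t b"
    show "t \<le> j"
    proof (rule ccontr)
      assume "\<not> t \<le> j"
      then have "wpos w t b < wpos w t a"
        using inv_pres_le[OF assms(1-3), of "Suc j" t] fl assms(7) by simp
      then show False using \<open>wpos w t a < wpos w t b\<close> by simp
    qed
  next
    assume "t \<le> j"
    show "wpos w t a < wpos w t b"
    proof (rule ccontr)
      assume "\<not> wpos w t a < wpos w t b"
      then have "wpos w t b < wpos w t a" using ne by simp
      then have "wpos w j b < wpos w j a"
        using inv_pres_le[OF assms(1-3), of t j] \<open>t \<le> j\<close> assms(4) by simp
      then show False using Pj by simp
    qed
  qed
qed

lemma cross_ex:
  assumes "b \<in> {1..n+1}" "1 \<le> a" "a < b"
  shows "\<exists>j<length w. on_node w j a \<and> on_node w j b"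
proof -
  let ?P = "\<lambda>t. wpos w t a < wpos w t b"
  have "?P 0" using assms by simp
  moreover have "\<not> ?P (length w)" using final assms by auto
  ultimately obtain j where j: "j < length w" "?P j" "\<not> ?P (Suc j)"
    using ex_flip[of ?P "length w"] by blast
  show ?thesis
  proof (rule ccontr)
    assume "\<not> ?thesis"
    then have "\<not> (on_node w j a \<and> on_node w j b)" using j by blast
    then have "\<not> wpos w (Suc j) b < wpos w (Suc j) a"
      using order_step[of a b w j] assms j by auto
    then have "wpos w (Suc j) b = wpos w (Suc j) a" using j by simp
    then show False using wpos_inj[of w "Suc j" b a] assms by auto
  qed
qed

lemma cross_props_lt:
  assumes "b \<in> {1..n+1}" "1 \<le> a" "a < b"
  shows "cross w a b < length w \<and> on_node w (cross w a b) a \<and> on_node w (cross w a b) b \<and>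
     (\<forall>j<length w. on_node w j a \<and> on_node w j b \<longrightarrow> j = cross w a b)"
proof -
  obtain j where j: "j<length w" "on_node w j a" "on_node w j b" using cross_ex[OF assms] by blast
  have u: "j' = j" if "j' < length w" "on_node w j' a" "on_node w j' b" for j'
  proof -
    have "wpos w j a < wpos w j b" using char[OF assms j, of j] j by simp
    then have "j \<le> j'" using char[OF assms that, of j] j by simp
    moreover have "wpos w j' a < wpos w j' b" using char[OF assms that, of j'] that by simp
    then have "j' \<le> j" using char[OF assms j, of j'] that by simp
    ultimately show ?thesis by simp
  qed
  have "cross w a b = j" unfolding cross_def
  proof (rule the_equality)
    show "j < length w \<and> on_node w j a \<and> on_node w j b" using j by blast
  next
    fix j' assume "j' < length w \<and> on_node w j' a \<and> on_node w j' b"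
    then show "j' = j" using u by blast
  qed
  then show ?thesis using j u by blast
qed

lemma cross_order:
  assumes "b \<in> {1..n+1}" "1 \<le> a" "a < b" "t \<le> length w"
  shows "wpos w t a < wpos w t b \<longleftrightarrow> t \<le> cross w a b"
proof -
  have p: "cross w a b < length w" "on_node w (cross w a b) a" "on_node w (cross w a b) b"
    using cross_props_lt[OF assms(1-3)] by auto
  show ?thesis by (rule char[OF assms(1-3) p assms(4)])
qed

lemma node_pair:
  assumes "j < length w"
  shows "\<exists>a b. 1 \<le> a \<and> a < b \<and> b \<le> n+1 \<and> on_node w j a \<and> on_node w j b"
  using S_nonempty[OF assms] unfolding S_def Pr_def by auto

end



lemma all3: "(\<forall>t<(3::nat). P t) \<longleftrightarrow> P 0 \<and> P 1 \<and> P 2"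
  by (auto simp: numeral_3_eq_3 numeral_2_eq_2 less_Suc_eq)
lemma allS3: "(\<forall>t. Suc t < (3::nat) \<longrightarrow> P t) \<longleftrightarrow> P 0 \<and> P 1"
  by (auto simp: numeral_3_eq_3 less_Suc_eq)
lemma all2: "(\<forall>t<(2::nat). P t) \<longleftrightarrow> P 0 \<and> P 1"
  by (auto simp: numeral_2_eq_2 less_Suc_eq)
lemma allS2: "(\<forall>t. Suc t < (2::nat) \<longrightarrow> P t) \<longleftrightarrow> P 0"
  by (auto simp: numeral_2_eq_2 less_Suc_eq)
lemma allS3': "(\<forall>t. Suc t < Suc (Suc (Suc 0)) \<longrightarrow> P t) \<longleftrightarrow> P 0 \<and> P (Suc 0)"
  by (auto simp: less_Suc_eq)
lemma upt3: "[0..<3] = [0,1,2::nat]" by (simp add: numeral_3_eq_3 upt_rec)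
lemma upt2: "[0..<2] = [0,1::nat]" by (simp add: numeral_2_eq_2 upt_rec)

context RL begin

lemma indD_empty: "ind_D n w = 0 \<Longrightarrow> j < length w \<Longrightarrow> \<not> wpos w j (n+1) < w!j"
  unfolding ind_D_def by (auto simp: card_eq_0_iff)

lemma indA_empty: "ind_A w = 0 \<Longrightarrow> j < length w \<Longrightarrow> \<not> Suc (w!j) < wpos w j 1"
  unfolding ind_A_def by (auto simp: card_eq_0_iff)

lemma L1D:
  assumes "ind_D n w = 0" "a \<in> {1..n}" "j < length w" "on_node w j a" "cross w a (n+1) < j"
  shows False
proof -
  have "\<not> wpos w j a < wpos w j (n+1)" using cross_order[of "n+1" a j] assms by auto
  moreover have "wpos w j a \<noteq> wpos w j (n+1)" using wpos_inj[of w j a "n+1"] assms(2) by auto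
  ultimately have lt: "wpos w j (n+1) < wpos w j a" by simp
  have "\<not> on_node w j (n+1)" using cross_props_lt[of "n+1" a] assms by auto
  then show False using lt assms(4) indD_empty[OF assms(1,3)] unfolding on_node_def by auto
qed

lemma L1A:
  assumes "ind_A w = 0" "a \<in> {2..n+1}" "j < length w" "on_node w j a" "cross w 1 a < j"
  shows False
proof -
  have "\<not> wpos w j 1 < wpos w j a" using cross_order[of a 1 j] assms by auto
  moreover have "a \<noteq> 1" using assms(2) by simp
  then have "wpos w j a \<noteq> wpos w j 1" using wpos_inj[of w j a 1] by auto
  ultimately have lt: "wpos w j a < wpos w j 1" by simp
  have "\<not> on_node w j 1" using cross_props_lt[of a 1] assms by auto
  then show False using lt assms(4) indA_empty[OF assms(1,3)] unfolding on_node_def by auto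
qed

lemma L2D:
  assumes "ind_D n w = 0" "1 \<le> k" "k < n"
  shows "cross w k (n+1) < cross w (k+1) (n+1)"
proof (rule ccontr)
  let ?c1 = "cross w k (n+1)" and ?c2 = "cross w (k+1) (n+1)"
  assume "\<not> ?thesis"
  have p1: "?c1 < length w" "on_node w ?c1 k" "on_node w ?c1 (n+1)"
    using cross_props_lt[of "n+1" k] assms by auto
  have p2: "?c2 < length w" "on_node w ?c2 (k+1)" "on_node w ?c2 (n+1)"
    using cross_props_lt[of "n+1" "k+1"] assms by auto
  show False
  proof (cases "?c1 = ?c2")
    case True
    then show False using three_wire[of w ?c1 k "n+1" "k+1"] p1 p2 assms by auto
  next
    case False
    then have lt: "?c2 < ?c1" using \<open>\<not> ?c1 < ?c2\<close> by simp
    have "wpos w ?c1 k < wpos w ?c1 (n+1)" using cross_order[of "n+1" k ?c1] assms p1 by auto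
    moreover have "\<not> wpos w ?c1 (k+1) < wpos w ?c1 (n+1)"
      using cross_order[of "n+1" "k+1" ?c1] assms p1 lt by auto
    moreover have "wpos w ?c1 (k+1) \<noteq> wpos w ?c1 (n+1)" using wpos_inj[of w ?c1 "k+1" "n+1"] assms by auto
    ultimately have "wpos w ?c1 k < wpos w ?c1 (k+1)" by simp
    then have "?c1 \<le> cross w k (k+1)" using cross_order[of "k+1" k ?c1] assms p1 by auto
    moreover have "cross w k (k+1) < length w" "on_node w (cross w k (k+1)) (k+1)"
      using cross_props_lt[of "k+1" k] assms by auto
    ultimately show False using L1D[of "k+1" "cross w k (k+1)"] assms lt by auto
  qed
qed

lemma L2A:
  assumes "ind_A w = 0" "2 \<le> k" "k \<le> n"
  shows "cross w 1 (k+1) < cross w 1 k"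
proof (rule ccontr)
  let ?c1 = "cross w 1 k" and ?c2 = "cross w 1 (k+1)"
  assume "\<not> ?thesis"
  have p1: "?c1 < length w" "on_node w ?c1 k" "on_node w ?c1 1"
    using cross_props_lt[of k 1] assms by auto
  have p2: "?c2 < length w" "on_node w ?c2 (k+1)" "on_node w ?c2 1"
    using cross_props_lt[of "k+1" 1] assms by auto
  show False
  proof (cases "?c1 = ?c2")
    case True
    then show False using three_wire[of w ?c1 k 1 "k+1"] p1 p2 assms by auto
  next
    case False
    then have lt: "?c1 < ?c2" using \<open>\<not> ?c2 < ?c1\<close> by simp
    have "wpos w ?c2 1 < wpos w ?c2 (k+1)" using cross_order[of "k+1" 1 ?c2] assms p2 by auto
    moreover have "\<not> wpos w ?c2 1 < wpos w ?c2 k"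
      using cross_order[of k 1 ?c2] assms p2 lt by auto
    moreover have "k \<noteq> 1" using assms by simp
    then have "wpos w ?c2 k \<noteq> wpos w ?c2 1" using wpos_inj[of w ?c2 k 1] by auto
    ultimately have "wpos w ?c2 k < wpos w ?c2 (k+1)" by simp
    then have "?c2 \<le> cross w k (k+1)" using cross_order[of "k+1" k ?c2] assms p2 by auto
    moreover have "cross w k (k+1) < length w" "on_node w (cross w k (k+1)) k"
      using cross_props_lt[of "k+1" k] assms by auto
    moreover have "cross w k (k+1) = cross w (k+1) k" by (rule cross_sym)
    ultimately show False using L1A[of k "cross w k (k+1)"] assms lt by auto
  qed
qed

lemma monoD: "ind_D n w = 0 \<Longrightarrow> 1 \<le> a \<Longrightarrow> a < b \<Longrightarrow> b \<le> n \<Longrightarrow> cross w a (n+1) < cross w b (n+1)"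
proof (induction b)
  case 0 then show ?case by simp
next
  case (Suc b)
  show ?case
  proof (cases "a < b")
    case True
    then show ?thesis using Suc L2D[of b] by (metis Suc_eq_plus1 Suc_le_lessD dual_order.strict_trans le_eq_less_or_eq less_imp_le_nat)
  next
    case False
    then have "a = b" using Suc by simp
    then show ?thesis using Suc L2D[of b] by simp
  qed
qed

lemma monoA: "ind_A w = 0 \<Longrightarrow> 2 \<le> a \<Longrightarrow> a < b \<Longrightarrow> b \<le> n+1 \<Longrightarrow> cross w 1 b < cross w 1 a"
proof (induction b)
  case 0 then show ?case by simp
next
  case (Suc b)
  show ?case
  proof (cases "a < b")
    case True
    then have "cross w 1 b < cross w 1 a" using Suc by simp
    moreover have "cross w 1 (b+1) < cross w 1 b" using L2A[of b] Suc True by simp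
    ultimately show ?thesis by simp
  next
    case False
    then have "a = b" using Suc by simp
    then show ?thesis using Suc L2A[of b] by simp
  qed
qed

lemma DnodeD: "j < length w \<Longrightarrow> on_node w j (n+1) \<Longrightarrow> \<exists>b\<in>{1..n}. j = cross w b (n+1)"
proof -
  assume j: "j < length w" "on_node w j (n+1)"
  obtain a b where ab: "1 \<le> a" "a < b" "b \<le> n+1" "on_node w j a" "on_node w j b"
    using node_pair[OF j(1)] by blast
  have "b = n+1" using three_wire[of w j "n+1" a b] ab j by auto
  then have "j = cross w a (n+1)" using cross_props_lt[of "n+1" a] ab j by auto
  then show ?thesis using ab \<open>b = n+1\<close> by auto
qed

lemma AnodeA: "j < length w \<Longrightarrow> on_node w j 1 \<Longrightarrow> \<exists>b\<in>{2..n+1}. j = cross w 1 b"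
proof -
  assume j: "j < length w" "on_node w j 1"
  obtain a b where ab: "1 \<le> a" "a < b" "b \<le> n+1" "on_node w j a" "on_node w j b"
    using node_pair[OF j(1)] by blast
  have "a = 1" using three_wire[of w j 1 a b] ab j by auto
  then have "j = cross w 1 b" using cross_props_lt[of b 1] ab j by auto
  then show ?thesis using ab \<open>a = 1\<close> by auto
qed

end


context RL begin

lemma pathD_lt:
  assumes D: "ind_D n w = 0" and k: "1 \<le> k" "k < n"
  shows "rigorous_path n w k [k, n+1, k+1] \<and> path_peaks w k [k, n+1, k+1] = {cross w k (n+1)}"
proof -
  define ws where "ws = [k, n+1, k+1]"
  define c1 where "c1 = cross w k (n+1)"
  define c2 where "c2 = cross w (k+1) (n+1)"
  have c2': "cross w (n+1) (k+1) = c2" unfolding c2_def by (rule cross_sym)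
  have lt: "c1 < c2" unfolding c1_def c2_def using L2D D k by simp
  have c2N: "c2 < length w" unfolding c2_def using cross_props_lt[of "n+1" "k+1"] k by simp
  have ent: "seg_entry w ws 0 = length w" "seg_entry w ws 1 = c1" "seg_entry w ws 2 = c2"
    unfolding seg_entry_def ws_def c1_def using c2' by auto
  have ext: "seg_exit w ws 0 = c1" "seg_exit w ws 1 = c2" "seg_exit w ws 2 = length w"
    unfolding seg_exit_def ws_def c1_def using c2' by (auto simp: numeral_2_eq_2 numeral_3_eq_3)
  have s0: "straight w k ws 0 = []"
    unfolding straight_def using ent ext L1D[OF D, of k] k
    by (auto simp: filter_empty_conv ws_def upward_def c1_def)
  have s1: "straight w k ws 1 = []"
  proof -
    have "False" if h: "j < length w" "on_node w j (n+1)" "c1 < j" "j < c2" for j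
    proof -
      obtain b where b: "b \<in> {1..n}" "j = cross w b (n+1)" using DnodeD h by blast
      show False
      proof (cases "b \<le> k")
        case True
        then have "cross w b (n+1) \<le> c1" unfolding c1_def using monoD[OF D, of b k] b k
          by (cases "b = k") auto
        then show False using h b by simp
      next
        case False
        then have "c2 \<le> cross w b (n+1)" unfolding c2_def using monoD[OF D, of "k+1" b] b k
          by (cases "b = k+1") auto
        then show False using h b by simp
      qed
    qed
    then show ?thesis unfolding straight_def using ent ext k
      by (auto simp: filter_empty_conv ws_def upward_def)
  qed
  have s2: "straight w k ws 2 = []"
    unfolding straight_def using ent ext L1D[OF D, of "k+1"] k
    by (auto simp: filter_empty_conv ws_def upward_def c2_def)
  have vis: "visits w k ws = [c1, c2]"
    unfolding visits_def using s0 s1 s2 ext by (simp add: ws_def upt3 numeral_2_eq_2)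
  have len: "length ws = Suc (Suc (Suc 0))" by (simp add: ws_def)
  have "rigorous_path n w k ws"
    unfolding rigorous_path_def len All_less_Suc2 allS3'
    using vis s0 s1 s2 ent ext lt c2N k
    by (simp add: ws_def upward_def numeral_2_eq_2)
  moreover have "path_peaks w k ws = {c1}"
    unfolding path_peaks_def using ext k
    by (auto simp: ws_def allS3 upward_def c1_def less_Suc_eq numeral_3_eq_3 intro!: exI[of _ 0])
  ultimately show ?thesis unfolding ws_def c1_def by simp
qed

end


context RL begin

lemma allS2': "(\<forall>t. Suc t < Suc (Suc 0) \<longrightarrow> P t) \<longleftrightarrow> P 0"
  by auto

lemma pathD_eq:
  assumes D: "ind_D n w = 0" and k: "1 \<le> n"
  shows "rigorous_path n w n [n, n+1] \<and> path_peaks w n [n, n+1] = {cross w n (n+1)}"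
proof -
  define ws where "ws = [n, n+1]"
  define c1 where "c1 = cross w n (n+1)"
  have c1N: "c1 < length w" unfolding c1_def using cross_props_lt[of "n+1" n] k by simp
  have ent: "seg_entry w ws 0 = length w" "seg_entry w ws 1 = c1"
    unfolding seg_entry_def ws_def c1_def by auto
  have ext: "seg_exit w ws 0 = c1" "seg_exit w ws 1 = length w"
    unfolding seg_exit_def ws_def c1_def by (auto simp: numeral_2_eq_2)
  have s0: "straight w n ws 0 = []"
    unfolding straight_def using ent ext L1D[OF D, of n] k
    by (auto simp: filter_empty_conv ws_def upward_def c1_def)
  have s1: "straight w n ws 1 = []"
  proof -
    have "False" if h: "j < length w" "on_node w j (n+1)" "c1 < j" for j
    proof -
      obtain b where b: "b \<in> {1..n}" "j = cross w b (n+1)" using DnodeD h by blast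
      then have "cross w b (n+1) \<le> c1" unfolding c1_def using monoD[OF D, of b n] b k
          by (cases "b = n") auto
      then show False using h b by simp
    qed
    then show ?thesis unfolding straight_def using ent ext
      by (auto simp: filter_empty_conv ws_def upward_def)
  qed
  have vis: "visits w n ws = [c1]"
    unfolding visits_def using s0 s1 ext by (simp add: ws_def upt2)
  have len: "length ws = Suc (Suc 0)" by (simp add: ws_def)
  have "rigorous_path n w n ws"
    unfolding rigorous_path_def len All_less_Suc2 allS2'
    using vis s0 s1 ent ext c1N k
    by (simp add: ws_def upward_def)
  moreover have "path_peaks w n ws = {c1}"
    unfolding path_peaks_def using ext k
    by (auto simp: ws_def upward_def c1_def less_Suc_eq numeral_2_eq_2)
  ultimately show ?thesis unfolding ws_def c1_def by simp
qed

lemma pathA_1: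
  assumes A: "ind_A w = 0" and k: "1 \<le> n"
  shows "rigorous_path n w 1 [1, 2] \<and> path_peaks w 1 [1, 2] = {cross w 1 2}"
proof -
  define ws where "ws = [1, 2::nat]"
  define c1 where "c1 = cross w 1 2"
  have c1N: "c1 < length w" unfolding c1_def using cross_props_lt[of 2 1] k by simp
  have ent: "seg_entry w ws 0 = length w" "seg_entry w ws 1 = c1"
    unfolding seg_entry_def ws_def c1_def by auto
  have ext: "seg_exit w ws 0 = c1" "seg_exit w ws 1 = length w"
    unfolding seg_exit_def ws_def c1_def by (auto simp: numeral_2_eq_2)
  have s0: "straight w 1 ws 0 = []"
  proof -
    have "False" if h: "j < length w" "on_node w j 1" "c1 < j" for j
    proof -
      obtain b where b: "b \<in> {2..n+1}" "j = cross w 1 b" using AnodeA h by blast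
      then have "cross w 1 b \<le> c1" unfolding c1_def using monoA[OF A, of 2 b] b k
          by (cases "b = 2") auto
      then show False using h b by simp
    qed
    then show ?thesis unfolding straight_def using ent ext
      by (auto simp: filter_empty_conv ws_def upward_def)
  qed
  have s1: "straight w 1 ws 1 = []"
    unfolding straight_def using ent ext L1A[OF A, of 2] k
    by (auto simp: filter_empty_conv ws_def upward_def c1_def)
  have vis: "visits w 1 ws = [c1]"
    unfolding visits_def using s0 s1 ext by (simp add: ws_def upt2)
  have len: "length ws = Suc (Suc 0)" by (simp add: ws_def)
  have "rigorous_path n w 1 ws"
    unfolding rigorous_path_def len All_less_Suc2 allS2'
    using vis s0 s1 ent ext c1N k
    by (simp add: ws_def upward_def)
  moreover have "path_peaks w 1 ws = {c1}"
    unfolding path_peaks_def using ext k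
    by (auto simp: ws_def upward_def c1_def less_Suc_eq numeral_2_eq_2)
  ultimately show ?thesis unfolding ws_def c1_def by simp
qed

lemma pathA_gt:
  assumes A: "ind_A w = 0" and k: "2 \<le> k" "k \<le> n"
  shows "rigorous_path n w k [k, 1, k+1] \<and> path_peaks w k [k, 1, k+1] = {cross w 1 (k+1)}"
proof -
  define ws where "ws = [k, 1, k+1]"
  define c1 where "c1 = cross w 1 k"
  define c2 where "c2 = cross w 1 (k+1)"
  have c1': "cross w k 1 = c1" unfolding c1_def by (rule cross_sym)
  have lt: "c2 < c1" unfolding c1_def c2_def using L2A A k by simp
  have c1N: "c1 < length w" unfolding c1_def using cross_props_lt[of k 1] k by simp
  have ent: "seg_entry w ws 0 = length w" "seg_entry w ws 1 = c1" "seg_entry w ws 2 = c2"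
    unfolding seg_entry_def ws_def c2_def using c1' by auto
  have ext: "seg_exit w ws 0 = c1" "seg_exit w ws 1 = c2" "seg_exit w ws 2 = length w"
    unfolding seg_exit_def ws_def c2_def using c1' by (auto simp: numeral_2_eq_2 numeral_3_eq_3)
  have s0: "straight w k ws 0 = []"
    unfolding straight_def using ent ext L1A[OF A, of k] k
    by (auto simp: filter_empty_conv ws_def upward_def c1_def)
  have s1: "straight w k ws 1 = []"
  proof -
    have "False" if h: "j < length w" "on_node w j 1" "c2 < j" "j < c1" for j
    proof -
      obtain b where b: "b \<in> {2..n+1}" "j = cross w 1 b" using AnodeA h by blast
      show False
      proof (cases "b \<le> k")
        case True
        then have "c1 \<le> cross w 1 b" unfolding c1_def using monoA[OF A, of b k] b k
          by (cases "b = k") auto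
        then show False using h b by simp
      next
        case False
        then have "cross w 1 b \<le> c2" unfolding c2_def using monoA[OF A, of "k+1" b] b k
          by (cases "b = k+1") auto
        then show False using h b by simp
      qed
    qed
    then show ?thesis unfolding straight_def using ent ext k
      by (auto simp: filter_empty_conv ws_def upward_def)
  qed
  have s2: "straight w k ws 2 = []"
    unfolding straight_def using ent ext L1A[OF A, of "k+1"] k
    by (auto simp: filter_empty_conv ws_def upward_def c2_def)
  have vis: "visits w k ws = [c1, c2]"
    unfolding visits_def using s0 s1 s2 ext by (simp add: ws_def upt3 numeral_2_eq_2)
  have len: "length ws = Suc (Suc (Suc 0))" by (simp add: ws_def)
  have "rigorous_path n w k ws"
    unfolding rigorous_path_def len All_less_Suc2 allS3'
    using vis s0 s1 s2 ent ext lt c1N k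
    by (simp add: ws_def upward_def numeral_2_eq_2)
  moreover have "path_peaks w k ws = {c2}"
    unfolding path_peaks_def using ext k
    by (auto simp: ws_def allS3 upward_def c2_def less_Suc_eq numeral_3_eq_3 intro!: exI[of _ "Suc 0"])
  ultimately show ?thesis unfolding ws_def c2_def by simp
qed

end

theorem mainTheorem14:
  fixes n :: nat and w :: "nat list"
  assumes "n \<ge> 1" and "reduced_longest n w"
  shows "(ind_D n w = 0 \<longrightarrow>
            (\<forall>k\<in>{1..n}. rigorous_path n w k (remdups_adj [k, n + 1, k + 1]) \<and>
                        path_peaks w k (remdups_adj [k, n + 1, k + 1]) = {cross w k (n + 1)}))
       \<and> (ind_A w = 0 \<longrightarrow>
            (\<forall>k\<in>{1..n}. rigorous_path n w k (remdups_adj [k, 1, k + 1]) \<and>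
                        path_peaks w k (remdups_adj [k, 1, k + 1]) = {cross w 1 (k + 1)}))"
proof -
  interpret RL n w using assms(2) by unfold_locales
  show ?thesis
  proof (rule conjI; intro impI ballI)
    fix k assume D: "ind_D n w = 0" and k: "k \<in> {1..n}"
    show "rigorous_path n w k (remdups_adj [k, n + 1, k + 1]) \<and>
          path_peaks w k (remdups_adj [k, n + 1, k + 1]) = {cross w k (n + 1)}"
    proof (cases "k = n")
      case True
      then show ?thesis using pathD_eq[OF D assms(1)] by simp
    next
      case False
      then show ?thesis using pathD_lt[OF D, of k] k by simp
    qed
  next
    fix k assume A: "ind_A w = 0" and k: "k \<in> {1..n}"
    show "rigorous_path n w k (remdups_adj [k, 1, k + 1]) \<and>
          path_peaks w k (remdups_adj [k, 1, k + 1]) = {cross w 1 (k + 1)}"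
    proof (cases "k = 1")
      case True
      then show ?thesis using pathA_1[OF A assms(1)] by (simp add: numeral_2_eq_2)
    next
      case False
      then show ?thesis using pathA_gt[OF A, of k] k by simp
    qed
  qed
qed

end
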